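(* Let $d=2$, $X\sim\mathcal{N}(0,I_2)$ independent of $\beta$, $\bar\beta=(1,0)$ and $\beta=\bar\beta+\epsilon$ with $\epsilon=(1,-1)$ or $\epsilon=(-1,1)$ each with probability $1/2$ (so $\epsilon$ and $-\epsilon$ have the same distribution). Then no solution $\hat\beta^{\mathrm{RLHF}}$ of the moment equation $\mathbb{E}_X[\sigma(X^\top\hat\beta^{\mathrm{RLHF}})X]=\mathbb{E}_X[\mathbb{E}_\beta[\sigma(X^\top\beta)]X]$ is a scalar multiple of $\bar\beta$; in particular the RLHF estimator does not recover the direction of $\bar\beta$ even though the heterogeneity is symmetric. *)

theory Defs
  imports "HOL-Probability.Probability"
begin

definition sigmoid :: "real \<Rightarrow> real" where
  "sigmoid t = 1 / (1 + exp (- t))"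

definition gauss2 :: "(real \<times> real) measure" where
  "gauss2 = density lborel std_normal_density \<Otimes>\<^sub>M density lborel std_normal_density"

definition eps_dist :: "(real \<times> real) pmf" where
  "eps_dist = pmf_of_set {(1, -1), (-1, 1)}"

definition beta_bar :: "real \<times> real" where
  "beta_bar = (1, 0)"

end

theory Submission
  imports Defs
begin

abbreviation N1 :: "real measure" where
  "N1 \<equiv> density lborel std_normal_density"

lemma sigmoid_alt: "sigmoid t = exp t / (1 + exp t)"
  unfolding sigmoid_def by (simp add: exp_minus field_simps)

lemma sigmoid_fun: "sigmoid = (\<lambda>t. 1 / (1 + exp (- t)))"
  by (rule ext) (simp add: sigmoid_def)

lemma sigmoid_meas[measurable]: "sigmoid \<in> borel_measurable borel"
  unfolding sigmoid_fun by measurable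

lemma sigmoid_pos: "0 < sigmoid t"
  unfolding sigmoid_def by (simp add: add_pos_pos)

lemma one_exp_pos: "0 < 1 + exp (t::real)"
  by (simp add: add_pos_pos)

lemma sigmoid_less1: "sigmoid t < 1"
  unfolding sigmoid_alt using one_exp_pos[of t] by (simp add: divide_less_eq)

lemma sigmoid_minus: "sigmoid (- t) = 1 - sigmoid t"
  unfolding sigmoid_alt using one_exp_pos[of t] by (simp add: exp_minus field_simps)

lemma key_identity:
  fixes y t :: real
  shows "2 * sigmoid y - sigmoid (y + t) - sigmoid (y - t) =
    exp y * (exp y - 1) * (exp t - 1)^2 / ((1 + exp y) * (1 + exp y * exp t) * (exp y + exp t))"
proof -
  define a where "a = exp y"
  define b where "b = exp t"
  have a: "a > 0" and b: "b > 0" unfolding a_def b_def by auto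
  have e1: "exp (y + t) = a * b" unfolding a_def b_def by (simp add: exp_add)
  have e2: "exp (y - t) = a / b" unfolding a_def b_def by (simp add: exp_diff)
  have "2 * sigmoid y - sigmoid (y + t) - sigmoid (y - t)
     = 2 * a / (1 + a) - a * b / (1 + a * b) - (a / b) / (1 + a / b)"
    unfolding sigmoid_alt e1 e2 a_def by simp
  also have "\<dots> = a * (a - 1) * (b - 1)^2 / ((1 + a) * (1 + a * b) * (a + b))"
  proof -
    have n1: "1 + a * b \<noteq> 0" "a + b \<noteq> 0" "1 + a \<noteq> 0" "b \<noteq> 0" proof -
      have ab: "0 < a * b" using a b by simp
      show "1 + a * b \<noteq> 0" using ab by linarith
      show "a + b \<noteq> 0" using a b by linarith
      show "1 + a \<noteq> 0" using a by linarith
      show "b \<noteq> 0" using b by linarith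
    qed
    have r: "(a / b) / (1 + a / b) = a / (a + b)" using n1 a b by (simp add: field_simps)
    have "2 * a / (1 + a) - a * b / (1 + a * b) - a / (a + b) = 
      (2*a*(1+a*b)*(a+b) - a*b*(1+a)*(a+b) - a*(1+a)*(1+a*b)) / ((1 + a) * (1 + a * b) * (a + b))"
      using n1 by (simp add: divide_simps) (simp add: algebra_simps)
    also have "2*a*(1+a*b)*(a+b) - a*b*(1+a)*(a+b) - a*(1+a)*(1+a*b) = a * (a - 1) * (b - 1)^2"
      by (simp add: algebra_simps power2_eq_square)
    finally show ?thesis unfolding r .
  qed
  finally show ?thesis unfolding a_def b_def .
qed

lemma key_nonneg:
  fixes y t :: real
  shows "0 \<le> y * (2 * sigmoid y - sigmoid (y + t) - sigmoid (y - t))"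
proof -
  have "0 \<le> y * (exp y - 1)"
  proof (cases "y \<ge> 0")
    case True then show ?thesis by simp
  next
    case False then show ?thesis by (simp add: mult_nonpos_nonpos)
  qed
  then have "0 \<le> exp y * (y * (exp y - 1)) * (exp t - 1)^2"
    by simp
  then have "0 \<le> y * (exp y * (exp y - 1) * (exp t - 1)^2) / ((1 + exp y) * (1 + exp y * exp t) * (exp y + exp t))"
    by (intro divide_nonneg_pos) (auto simp: add_pos_pos mult_ac)
  then show ?thesis unfolding key_identity by (simp add: mult_ac)
qed

lemma key_pos:
  fixes y t :: real
  assumes "y \<noteq> 0" "t \<noteq> 0"
  shows "0 < y * (2 * sigmoid y - sigmoid (y + t) - sigmoid (y - t))"
proof -
  have "0 < y * (exp y - 1)"
  proof (cases "y > 0")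
    case True then show ?thesis by simp
  next
    case False then have "y < 0" using assms by simp
    then show ?thesis by (simp add: mult_neg_neg)
  qed
  moreover have "0 < (exp t - 1)^2" using assms by simp
  ultimately have "0 < exp y * (y * (exp y - 1)) * (exp t - 1)^2"
    by simp
  then have "0 < y * (exp y * (exp y - 1) * (exp t - 1)^2) / ((1 + exp y) * (1 + exp y * exp t) * (exp y + exp t))"
    by (intro divide_pos_pos) (auto simp: add_pos_pos mult_ac)
  then show ?thesis unfolding key_identity by (simp add: mult_ac)
qed

lemma N1_prob: "prob_space N1"
  by (rule prob_space_normal_density) simp

lemma N1_pair: "pair_prob_space N1 N1"
  unfolding pair_prob_space_def pair_sigma_finite_def
  using N1_prob prob_space_imp_sigma_finite by blast

lemma sets_N1[simp, measurable_cong]: "sets N1 = sets borel"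
  by simp

lemma phi_meas[measurable]: "std_normal_density \<in> borel_measurable borel"
  by measurable

lemma N1_integral: 
  fixes f :: "real \<Rightarrow> real"
  assumes [measurable]: "f \<in> borel_measurable borel"
  shows "integral\<^sup>L N1 f = (\<integral>x. std_normal_density x * f x \<partial>lborel)"
  by (subst integral_density) (auto simp: normal_density_nonneg)

lemma N1_integrable: 
  fixes f :: "real \<Rightarrow> real"
  assumes [measurable]: "f \<in> borel_measurable borel"
  shows "integrable N1 f \<longleftrightarrow> integrable lborel (\<lambda>x. std_normal_density x * f x)"
  by (subst integrable_density) (auto simp: normal_density_nonneg)

lemma N1_int_id: "integrable N1 (\<lambda>x. x)"
  using integrable_std_normal_moment[of 1] by (subst N1_integrable) auto

lemma N1_int_abs: "integrable N1 (\<lambda>x. \<bar>x\<bar>)"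
  using integrable_std_normal_moment_abs[of 1] by (subst N1_integrable) auto

lemma N1_mean: "(\<integral>x. x \<partial>N1) = 0"
  using std_normal_moment_odd[of 0] by (subst N1_integral) (auto dest: has_bochner_integral_integral_eq)

lemma N1_reflect:
  fixes f :: "real \<Rightarrow> real"
  assumes [measurable]: "f \<in> borel_measurable borel"
  shows "(\<integral>x. f (- x) \<partial>N1) = integral\<^sup>L N1 f"
proof -
  have "integral\<^sup>L N1 f = (\<integral>x. std_normal_density x * f x \<partial>lborel)"
    by (rule N1_integral) simp
  also have "\<dots> = \<bar>-1\<bar> *\<^sub>R (\<integral>x. std_normal_density (0 + (-1) * x) * f (0 + (-1) * x) \<partial>lborel)"
    by (rule lborel_integral_real_affine) simp
  also have "\<dots> = (\<integral>x. std_normal_density x * f (- x) \<partial>lborel)"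
    by (simp add: normal_density_def)
  also have "\<dots> = (\<integral>x. f (- x) \<partial>N1)"
    by (rule N1_integral[symmetric]) simp
  finally show ?thesis ..
qed

lemma N1_AE_nonzero: "AE x in N1. x \<noteq> 0"
  by (subst AE_density) (auto intro: AE_lborel_singleton[THEN AE_mp])

lemma distr_pair_snd: "distr (N1 \<Otimes>\<^sub>M N1) N1 snd = N1"
proof (intro measure_eqI)
  interpret P: pair_prob_space N1 N1 by (rule N1_pair)
  fix A assume A: "A \<in> sets (distr (N1 \<Otimes>\<^sub>M N1) N1 snd)"
  then have A': "A \<in> sets N1" by simp
  have "emeasure (distr (N1 \<Otimes>\<^sub>M N1) N1 snd) A = emeasure (N1 \<Otimes>\<^sub>M N1) (snd -` A \<inter> space (N1 \<Otimes>\<^sub>M N1))"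
    by (rule emeasure_distr) (use A' in auto)
  also have "snd -` A \<inter> space (N1 \<Otimes>\<^sub>M N1) = space N1 \<times> A"
    by (auto simp: space_pair_measure)
  also have "emeasure (N1 \<Otimes>\<^sub>M N1) (space N1 \<times> A) = emeasure N1 (space N1) * emeasure N1 A"
    using A' by (intro sigma_finite_measure.emeasure_pair_measure_Times prob_space_imp_sigma_finite N1_prob) auto
  also have "\<dots> = emeasure N1 A" using P.M1.emeasure_space_1 by simp
  finally show "emeasure (distr (N1 \<Otimes>\<^sub>M N1) N1 snd) A = emeasure N1 A" .
qed simp

lemma distr_pair_fst: "distr (N1 \<Otimes>\<^sub>M N1) N1 fst = N1"
  using prob_space.distr_pair_fst[OF N1_prob] by blast

lemma gauss2_snd:
  fixes f :: "real \<Rightarrow> real"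
  assumes [measurable]: "f \<in> borel_measurable borel" and "integrable N1 f"
  shows "integrable (N1 \<Otimes>\<^sub>M N1) (\<lambda>p. f (snd p))"
    and "(\<integral>p. f (snd p) \<partial>(N1 \<Otimes>\<^sub>M N1)) = integral\<^sup>L N1 f"
proof -
  show "integrable (N1 \<Otimes>\<^sub>M N1) (\<lambda>p. f (snd p))"
    using assms(2) by (subst (asm) distr_pair_snd[symmetric]) (subst (asm) integrable_distr_eq; simp)
  show "(\<integral>p. f (snd p) \<partial>(N1 \<Otimes>\<^sub>M N1)) = integral\<^sup>L N1 f"
    by (subst (2) distr_pair_snd[symmetric]) (subst integral_distr; simp)
qed

lemma gauss2_fst:
  fixes f :: "real \<Rightarrow> real"
  assumes [measurable]: "f \<in> borel_measurable borel" and "integrable N1 f"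
  shows "integrable (N1 \<Otimes>\<^sub>M N1) (\<lambda>p. f (fst p))"
proof -
  show "integrable (N1 \<Otimes>\<^sub>M N1) (\<lambda>p. f (fst p))"
    using assms(2) by (subst (asm) distr_pair_fst[symmetric]) (subst (asm) integrable_distr_eq; simp)
qed

lemma int_abs_fst: "integrable (N1 \<Otimes>\<^sub>M N1) (\<lambda>p. \<bar>fst p\<bar>)"
  by (rule gauss2_fst[OF _ N1_int_abs]) simp

lemma int_abs_snd: "integrable (N1 \<Otimes>\<^sub>M N1) (\<lambda>p. \<bar>snd p\<bar>)"
  by (rule gauss2_snd(1)[OF _ N1_int_abs]) simp

lemma int_snd: "integrable (N1 \<Otimes>\<^sub>M N1) (\<lambda>p. snd p)"
  by (rule gauss2_snd(1)[OF _ N1_int_id]) simp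

lemma mean_snd: "(\<integral>p. snd p \<partial>(N1 \<Otimes>\<^sub>M N1)) = 0"
  using gauss2_snd(2)[OF _ N1_int_id] N1_mean by simp

lemma int_vec:
  fixes s :: "real \<times> real \<Rightarrow> real"
  assumes [measurable]: "s \<in> borel_measurable (N1 \<Otimes>\<^sub>M N1)" and bnd: "\<forall>p. \<bar>s p\<bar> \<le> 1"
  shows "integrable (N1 \<Otimes>\<^sub>M N1) (\<lambda>p. s p *\<^sub>R p)"
proof (rule Bochner_Integration.integrable_bound[where f="\<lambda>p. \<bar>fst p\<bar> + \<bar>snd p\<bar>"])
  show "integrable (N1 \<Otimes>\<^sub>M N1) (\<lambda>p. \<bar>fst p\<bar> + \<bar>snd p\<bar>)"
    using int_abs_fst int_abs_snd by (rule Bochner_Integration.integrable_add)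
  have idm[measurable]: "(\<lambda>x. x) \<in> borel_measurable (N1 \<Otimes>\<^sub>M N1)"
    by (rule measurable_ident_sets, simp, subst borel_prod, rule refl)
  show "(\<lambda>p. s p *\<^sub>R p) \<in> borel_measurable (N1 \<Otimes>\<^sub>M N1)" by measurable
  show "AE p in N1 \<Otimes>\<^sub>M N1. norm (s p *\<^sub>R p) \<le> norm (\<bar>fst p\<bar> + \<bar>snd p\<bar>)"
  proof (rule AE_I2)
    fix p :: "real \<times> real"
    have sp: "\<bar>s p\<bar> \<le> 1" using bnd by blast
    have "norm (s p *\<^sub>R p) = \<bar>s p\<bar> * norm p" by simp
    also have "\<dots> \<le> 1 * norm p" by (rule mult_right_mono[OF sp]) simp
    also have "\<dots> \<le> \<bar>fst p\<bar> + \<bar>snd p\<bar>" using norm_Pair_le[of "fst p" "snd p"] by simp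
    finally show "norm (s p *\<^sub>R p) \<le> norm (\<bar>fst p\<bar> + \<bar>snd p\<bar>)" by simp
  qed
qed

lemma int_real:
  fixes s :: "real \<times> real \<Rightarrow> real"
  assumes [measurable]: "s \<in> borel_measurable (N1 \<Otimes>\<^sub>M N1)" and bnd: "\<forall>p. \<bar>s p\<bar> \<le> 1"
  shows "integrable (N1 \<Otimes>\<^sub>M N1) (\<lambda>p. s p * snd p)"
proof (rule Bochner_Integration.integrable_bound[where f="\<lambda>p. \<bar>snd p\<bar>"])
  show "integrable (N1 \<Otimes>\<^sub>M N1) (\<lambda>p. \<bar>snd p\<bar>)" by (rule int_abs_snd)
  show "(\<lambda>p. s p * snd p) \<in> borel_measurable (N1 \<Otimes>\<^sub>M N1)" by measurable
  show "AE p in N1 \<Otimes>\<^sub>M N1. norm (s p * snd p) \<le> norm (\<bar>snd p\<bar>)"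
  proof (rule AE_I2)
    fix p :: "real \<times> real"
    have "\<bar>s p\<bar> * \<bar>snd p\<bar> \<le> 1 * \<bar>snd p\<bar>" by (rule mult_right_mono) (simp_all add: bnd)
    then show "norm (s p * snd p) \<le> norm (\<bar>snd p\<bar>)" by (simp add: abs_mult)
  qed
qed

lemma sig_bnd: "\<bar>sigmoid t\<bar> \<le> 1"
  using sigmoid_pos[of t] sigmoid_less1[of t] by simp

theorem mainTheorem9:
  fixes b :: "real \<times> real"
  assumes "(\<integral>X. sigmoid (X \<bullet> b) *\<^sub>R X \<partial>gauss2)
         = (\<integral>X. measure_pmf.expectation eps_dist (\<lambda>e. sigmoid (X \<bullet> (beta_bar + e))) *\<^sub>R X \<partial>gauss2)"
  shows "\<not> (\<exists>c::real. b = c *\<^sub>R beta_bar)"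
proof
  assume "\<exists>c::real. b = c *\<^sub>R beta_bar"
  then obtain c where bc: "b = (c, 0)" by (auto simp: beta_bar_def)
  interpret P: pair_prob_space N1 N1 by (rule N1_pair)
  have g2: "gauss2 = N1 \<Otimes>\<^sub>M N1" by (simp add: gauss2_def)
  define s1 where "s1 = (\<lambda>p::real\<times>real. sigmoid (c * fst p))"
  define s2 where "s2 = (\<lambda>p::real\<times>real. (sigmoid (2 * fst p - snd p) + sigmoid (snd p)) / 2)"
  have s1m[measurable]: "s1 \<in> borel_measurable (N1 \<Otimes>\<^sub>M N1)" unfolding s1_def by measurable
  have s2m[measurable]: "s2 \<in> borel_measurable (N1 \<Otimes>\<^sub>M N1)" unfolding s2_def by measurable
  have b1: "\<forall>p. \<bar>s1 p\<bar> \<le> 1" unfolding s1_def using sig_bnd by simp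
  have b2: "\<forall>p. \<bar>s2 p\<bar> \<le> 1"
  proof
    fix p :: "real \<times> real"
    show "\<bar>s2 p\<bar> \<le> 1" unfolding s2_def
      using sigmoid_pos[of "2 * fst p - snd p"] sigmoid_less1[of "2 * fst p - snd p"]
        sigmoid_pos[of "snd p"] sigmoid_less1[of "snd p"] by simp
  qed
  have lhs_eq: "(\<lambda>X. sigmoid (X \<bullet> b) *\<^sub>R X) = (\<lambda>X. s1 X *\<^sub>R X)"
  proof
    fix X :: "real \<times> real"
    obtain x y where X: "X = (x, y)" by fastforce
    show "sigmoid (X \<bullet> b) *\<^sub>R X = s1 X *\<^sub>R X" by (simp add: X bc s1_def mult.commute)
  qed
  have e: "measure_pmf.expectation eps_dist (\<lambda>e. sigmoid (X \<bullet> (beta_bar + e))) = s2 X" for X :: "real \<times> real"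
  proof -
    obtain x y where X: "X = (x, y)" by fastforce
    have "measure_pmf.expectation eps_dist (\<lambda>e. sigmoid (X \<bullet> (beta_bar + e)))
       = (\<Sum>e\<in>{(1::real, -1::real), (-1, 1)}. sigmoid (X \<bullet> (beta_bar + e))) / card {(1::real, -1::real), (-1, 1)}"
      unfolding eps_dist_def by (rule integral_pmf_of_set) auto
    also have "\<dots> = s2 X" by (simp add: X s2_def beta_bar_def mult.commute)
    finally show ?thesis .
  qed
  have i1: "integrable (N1 \<Otimes>\<^sub>M N1) (\<lambda>X. s1 X *\<^sub>R X)" by (rule int_vec[OF s1m b1])
  have i2: "integrable (N1 \<Otimes>\<^sub>M N1) (\<lambda>X. s2 X *\<^sub>R X)" by (rule int_vec[OF s2m b2])
  have eq: "(\<integral>X. s1 X *\<^sub>R X \<partial>(N1 \<Otimes>\<^sub>M N1)) = (\<integral>X. s2 X *\<^sub>R X \<partial>(N1 \<Otimes>\<^sub>M N1))"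
    using assms unfolding lhs_eq e g2 .
  have "(\<integral>X. snd (s1 X *\<^sub>R X) \<partial>(N1 \<Otimes>\<^sub>M N1)) = (\<integral>X. snd (s2 X *\<^sub>R X) \<partial>(N1 \<Otimes>\<^sub>M N1))"
    unfolding integral_bounded_linear[OF bounded_linear_snd i1] integral_bounded_linear[OF bounded_linear_snd i2] eq ..
  then have eq2: "(\<integral>X. s1 X * snd X \<partial>(N1 \<Otimes>\<^sub>M N1)) = (\<integral>X. s2 X * snd X \<partial>(N1 \<Otimes>\<^sub>M N1))"
    by simp
  have z: "(\<integral>X. s1 X * snd X \<partial>(N1 \<Otimes>\<^sub>M N1)) = 0"
  proof -
    have "(\<integral>X. s1 X * snd X \<partial>(N1 \<Otimes>\<^sub>M N1)) = (\<integral>x. (\<integral>y. s1 (x, y) * snd (x, y) \<partial>N1) \<partial>N1)"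
      by (rule P.integral_fst'[symmetric]) (rule int_real[OF s1m b1])
    also have "\<dots> = 0" by (simp add: s1_def N1_mean)
    finally show ?thesis .
  qed
  have pos: "(\<integral>X. s2 X * snd X \<partial>(N1 \<Otimes>\<^sub>M N1)) > 0"
  proof -
    define k where "k = (\<lambda>p::real\<times>real. sigmoid (2 * fst p - snd p) + sigmoid (snd p) - 1)"
    define k' where "k' = (\<lambda>p::real\<times>real. sigmoid (- 2 * fst p - snd p) + sigmoid (snd p) - 1)"
    define D where "D = (\<lambda>p::real\<times>real. (sigmoid (2 * fst p - snd p) + sigmoid (snd p) - 1) * snd p)"
    define D' where "D' = (\<lambda>p::real\<times>real. D (- fst p, snd p))"
    define S where "S = (\<lambda>p::real\<times>real. (D p + D' p) / 2)"
    have km: "k \<in> borel_measurable (N1 \<Otimes>\<^sub>M N1)" unfolding k_def by measurable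
    have km': "k' \<in> borel_measurable (N1 \<Otimes>\<^sub>M N1)" unfolding k'_def by measurable
    have kb: "\<forall>p. \<bar>k p\<bar> \<le> 1"
    proof
      fix p :: "real \<times> real"
      show "\<bar>k p\<bar> \<le> 1" unfolding k_def
        using sigmoid_pos[of "2 * fst p - snd p"] sigmoid_less1[of "2 * fst p - snd p"]
          sigmoid_pos[of "snd p"] sigmoid_less1[of "snd p"] by simp
    qed
    have kb': "\<forall>p. \<bar>k' p\<bar> \<le> 1"
    proof
      fix p :: "real \<times> real"
      show "\<bar>k' p\<bar> \<le> 1" unfolding k'_def
        using sigmoid_pos[of "- 2 * fst p - snd p"] sigmoid_less1[of "- 2 * fst p - snd p"]
          sigmoid_pos[of "snd p"] sigmoid_less1[of "snd p"] by simp
    qed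
    have iD: "integrable (N1 \<Otimes>\<^sub>M N1) D"
      using int_real[OF km kb] unfolding D_def k_def by simp
    have iD': "integrable (N1 \<Otimes>\<^sub>M N1) D'"
      using int_real[OF km' kb'] unfolding D'_def D_def k'_def by simp
    have Dm[measurable]: "D \<in> borel_measurable (N1 \<Otimes>\<^sub>M N1)" unfolding D_def by measurable
    have hm: "(\<lambda>x. \<integral>y. D (x, y) \<partial>N1) \<in> borel_measurable borel"
      by (rule sigma_finite_measure.borel_measurable_lebesgue_integral[OF prob_space_imp_sigma_finite[OF N1_prob]]) (unfold D_def, measurable)
    have "integral\<^sup>L (N1 \<Otimes>\<^sub>M N1) D = (\<integral>x. (\<integral>y. D (x, y) \<partial>N1) \<partial>N1)"
      by (rule P.integral_fst'[OF iD, symmetric])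
    also have "\<dots> = (\<integral>x. (\<integral>y. D (- x, y) \<partial>N1) \<partial>N1)"
      by (rule N1_reflect[OF hm, symmetric])
    also have "\<dots> = integral\<^sup>L (N1 \<Otimes>\<^sub>M N1) D'"
      using P.integral_fst'[OF iD'] by (simp add: D'_def)
    finally have DD': "integral\<^sup>L (N1 \<Otimes>\<^sub>M N1) D' = integral\<^sup>L (N1 \<Otimes>\<^sub>M N1) D" by simp
    have iS: "integrable (N1 \<Otimes>\<^sub>M N1) S" unfolding S_def using iD iD' by simp
    have intS: "integral\<^sup>L (N1 \<Otimes>\<^sub>M N1) S = integral\<^sup>L (N1 \<Otimes>\<^sub>M N1) D"
      unfolding S_def using iD iD' DD' by simp
    have Sform: "S p = snd p * (2 * sigmoid (snd p) - sigmoid (snd p + 2 * fst p) - sigmoid (snd p - 2 * fst p)) / 2" for p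
    proof -
      have m1: "sigmoid (2 * fst p - snd p) = 1 - sigmoid (snd p - 2 * fst p)"
        using sigmoid_minus[of "snd p - 2 * fst p"] by simp
      have m2: "sigmoid (2 * (- fst p) - snd p) = 1 - sigmoid (snd p + 2 * fst p)"
      proof -
        have "2 * (- fst p) - snd p = - (snd p + 2 * fst p)" by simp
        then show ?thesis using sigmoid_minus[of "snd p + 2 * fst p"] by (metis)
      qed
      have Dp: "D p = snd p * (sigmoid (snd p) - sigmoid (snd p - 2 * fst p))"
        unfolding D_def m1 by (simp add: algebra_simps)
      have D'p: "D' p = snd p * (sigmoid (snd p) - sigmoid (snd p + 2 * fst p))"
        unfolding D'_def D_def fst_conv snd_conv m2 by (simp add: algebra_simps)
      show ?thesis unfolding S_def Dp D'p by (simp add: algebra_simps)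
    qed
    have Snn: "0 \<le> S p" for p
      unfolding Sform using key_nonneg[of "snd p" "2 * fst p"] by simp
    have Spos: "fst p \<noteq> 0 \<Longrightarrow> snd p \<noteq> 0 \<Longrightarrow> 0 < S p" for p
      unfolding Sform using key_pos[of "snd p" "2 * fst p"] by simp
    have "integral\<^sup>L (N1 \<Otimes>\<^sub>M N1) S \<noteq> 0"
    proof
      assume "integral\<^sup>L (N1 \<Otimes>\<^sub>M N1) S = 0"
      then have "AE p in N1 \<Otimes>\<^sub>M N1. S p = 0"
        using integral_nonneg_eq_0_iff_AE[OF iS] Snn by simp
      then have "AE p in N1 \<Otimes>\<^sub>M N1. fst p = 0 \<or> snd p = 0"
        by (rule AE_mp) (use Spos in force)
      then have "AE x in N1. AE y in N1. fst (x, y) = 0 \<or> snd (x, y) = 0"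
        by (rule P.AE_pair)
      then have "AE x in N1. AE y in N1. x = 0 \<or> y = 0" by simp
      then have "AE x in N1. False"
      proof (rule AE_mp)
        show "AE x in N1. (AE y in N1. x = 0 \<or> y = 0) \<longrightarrow> False"
          using N1_AE_nonzero
        proof (rule AE_mp)
          show "AE x in N1. x \<noteq> 0 \<longrightarrow> (AE y in N1. x = 0 \<or> y = 0) \<longrightarrow> False"
          proof (rule AE_I2, intro impI)
            fix x :: real
            assume "x \<noteq> 0" "AE y in N1. x = 0 \<or> y = 0"
            then have "AE y in N1. y = 0" by simp
            with N1_AE_nonzero have "AE y in N1. False" by eventually_elim simp
            then show False using P.M1.AE_False by simp
          qed
        qed
      qed
      then show False using P.M1.AE_False by simp
    qed
    then have "integral\<^sup>L (N1 \<Otimes>\<^sub>M N1) D > 0"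
      using integral_nonneg_AE[of S] Snn intS by (metis AE_I2 order_le_less)
    moreover have "(\<integral>X. s2 X * snd X \<partial>(N1 \<Otimes>\<^sub>M N1)) = integral\<^sup>L (N1 \<Otimes>\<^sub>M N1) D / 2"
    proof -
      have "(\<lambda>X. s2 X * snd X) = (\<lambda>X. D X / 2 + snd X / 2)"
        by (rule ext) (simp add: s2_def D_def field_simps)
      then have "(\<integral>X. s2 X * snd X \<partial>(N1 \<Otimes>\<^sub>M N1)) = (\<integral>X. D X / 2 + snd X / 2 \<partial>(N1 \<Otimes>\<^sub>M N1))"
        by simp
      also have "\<dots> = integral\<^sup>L (N1 \<Otimes>\<^sub>M N1) D / 2 + (\<integral>X. snd X \<partial>(N1 \<Otimes>\<^sub>M N1)) / 2"
        using iD int_snd by simp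
      finally show ?thesis using mean_snd by simp
    qed
    ultimately show ?thesis by simp
  qed
  show False using eq2 z pos by simp
qed

end
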